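(* Let $\mathcal Z$ be a finite zero-set, $k\ge0$ an integer, and $A\subseteq\mathbb Z_+^2$. If $A$ spans for $\mathcal Z$, then $A_{>k}$ spans for $\mathcal Z^{\swarrow k}$.
   Context: $\mathbb Z_+=\{0,1,2,\dots\}$; a zero-set is a union of rectangles $([0,a-1]\times[0,b-1])\cap\mathbb Z_+^2$. $\mathrm{row}(x,A)$ (resp. $\mathrm{col}(x,A)$) is the number of points of $A$ on the horizontal (resp. vertical) line through $x$; $\mathcal T(A)=A\cup\{x\notin A:(\mathrm{row}(x,A),\mathrm{col}(x,A))\notin\mathcal Z\}$; $A$ spans for $\mathcal Z$ if $\bigcup_t\mathcal T^t(A)=\mathbb Z_+^2$. $A_{>k}=\{x\in A:\mathrm{row}(x,A)>k\text{ or }\mathrm{col}(x,A)>k\}$. $\mathcal Z^{\swarrow k}=\{(u-k,v-k):(u,v)\in\mathcal Z,u\ge k,v\ge k\}$. *)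

theory Defs
  imports Main "HOL-Library.Extended_Nat"
begin

type_synonym pt = "nat \<times> nat"

definition rect :: "nat \<Rightarrow> nat \<Rightarrow> pt set" where
  "rect a b = {..<a} \<times> {..<b}"

definition zero_set :: "pt set \<Rightarrow> bool" where
  "zero_set Z \<longleftrightarrow> (\<exists>R :: pt set. Z = (\<Union>(a,b)\<in>R. rect a b))"

definition ecard :: "'a set \<Rightarrow> enat" where
  "ecard S = (if finite S then enat (card S) else \<infinity>)"

definition row :: "pt \<Rightarrow> pt set \<Rightarrow> enat" where
  "row x A = ecard {y \<in> A. snd y = snd x}"

definition col :: "pt \<Rightarrow> pt set \<Rightarrow> enat" where
  "col x A = ecard {y \<in> A. fst y = fst x}"

definition in_Z :: "enat \<Rightarrow> enat \<Rightarrow> pt set \<Rightarrow> bool" where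
  "in_Z r c Z \<longleftrightarrow> (\<exists>(u,v)\<in>Z. r = enat u \<and> c = enat v)"

definition T :: "pt set \<Rightarrow> pt set \<Rightarrow> pt set" where
  "T Z A = A \<union> {x. x \<notin> A \<and> \<not> in_Z (row x A) (col x A) Z}"

definition spans :: "pt set \<Rightarrow> pt set \<Rightarrow> bool" where
  "spans Z A \<longleftrightarrow> (\<Union>t. (T Z ^^ t) A) = UNIV"

definition A_gt :: "nat \<Rightarrow> pt set \<Rightarrow> pt set" where
  "A_gt k A = {x \<in> A. row x A > enat k \<or> col x A > enat k}"

definition shift :: "pt set \<Rightarrow> nat \<Rightarrow> pt set" where
  "shift Z k = {(u - k, v - k) | u v. (u, v) \<in> Z \<and> u \<ge> k \<and> v \<ge> k}"

end

theory Submission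
  imports Defs
begin

lemma ecard_mono: "X \<subseteq> Y \<Longrightarrow> ecard X \<le> ecard Y"
  unfolding ecard_def by (auto intro: card_mono dest: finite_subset)

lemma zero_set_down:
  assumes "zero_set Z" "(u,v) \<in> Z" "u' \<le> u" "v' \<le> v"
  shows "(u',v') \<in> Z"
  using assms unfolding zero_set_def rect_def by fastforce

lemma notZ_mono:
  assumes "zero_set Z" "\<forall>(u,v)\<in>Z. u < N \<and> v < N" "\<not> in_Z r c Z"
    "min r (enat N) \<le> r'" "min c (enat N) \<le> c'"
  shows "\<not> in_Z r' c' Z"
proof
  assume "in_Z r' c' Z"
  then obtain u v where uv: "(u,v) \<in> Z" "r' = enat u" "c' = enat v"
    unfolding in_Z_def by auto
  with assms(2) have "u < N" "v < N" by auto
  have "r \<le> enat u"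
    using assms(4) uv \<open>u < N\<close> by (cases r) (auto simp: min_def split: if_splits)
  then obtain a where a: "r = enat a" "a \<le> u" by (cases r) auto
  have "c \<le> enat v"
    using assms(5) uv \<open>v < N\<close> by (cases c) (auto simp: min_def split: if_splits)
  then obtain b where b: "c = enat b" "b \<le> v" by (cases c) auto
  have "(a,b) \<in> Z" using zero_set_down[OF assms(1) uv(1) a(2) b(2)] .
  with a b assms(3) show False unfolding in_Z_def by auto
qed

lemma shift_inZ:
  assumes "in_Z r c (shift Z k)"
  shows "in_Z (r + enat k) (c + enat k) Z"
  using assms unfolding in_Z_def shift_def by force

lemma chain_mono:
  fixes Bs :: "nat \<Rightarrow> 'a set"
  assumes "\<And>s. Bs s \<subseteq> Bs (Suc s)" "s \<le> s'"
  shows "Bs s \<subseteq> Bs s'"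
  using assms(2) by (induction rule: dec_induct) (use assms(1) in blast)+

lemma finite_in_chain:
  fixes Bs :: "nat \<Rightarrow> 'a set"
  assumes "\<And>s. Bs s \<subseteq> Bs (Suc s)" "finite F" "F \<subseteq> (\<Union>s. Bs s)"
  shows "\<exists>s. F \<subseteq> Bs s"
  using assms(2,3)
proof (induction rule: finite_induct)
  case empty then show ?case by auto
next
  case (insert x F)
  then obtain s where s: "F \<subseteq> Bs s" by auto
  from insert obtain s' where s': "x \<in> Bs s'" by auto
  have "Bs s \<subseteq> Bs (max s s')" "Bs s' \<subseteq> Bs (max s s')"
    by (rule chain_mono[of Bs, OF assms(1)], simp)+
  with s s' show ?case by blast
qed

lemma count:
  fixes Bs :: "nat \<Rightarrow> 'a set"
  assumes "S \<subseteq> (\<Union>s. Bs s) \<union> Lt" "finite Lt" "card Lt \<le> k"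
    "\<And>s. Bs s \<subseteq> Bs (Suc s)"
  shows "\<exists>s. min (ecard S) (enat N) \<le> ecard (S \<inter> Bs s) + enat k"
proof -
  obtain F where F: "F \<subseteq> S" "finite F" "min (ecard S) (enat N) \<le> enat (card F)"
  proof (cases "finite S")
    case True then show ?thesis using that[of S] by (auto simp: ecard_def)
  next
    case False
    then obtain F where "F \<subseteq> S" "finite F" "card F = N"
      using infinite_arbitrarily_large by blast
    then show ?thesis using that[of F] by auto
  qed
  have "F - Lt \<subseteq> (\<Union>s. Bs s)" using F assms(1) by auto
  then obtain s where s: "F - Lt \<subseteq> Bs s"
    using finite_in_chain[of Bs, OF assms(4)] F(2) by blast
  have "card F \<le> card (F - Lt) + card Lt"
  proof -
    have "F \<subseteq> (F - Lt) \<union> Lt" by auto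
    then have "card F \<le> card ((F - Lt) \<union> Lt)" using F(2) assms(2) by (intro card_mono) auto
    also have "\<dots> \<le> card (F - Lt) + card Lt" by (rule card_Un_le)
    finally show ?thesis .
  qed
  then have "card F \<le> card (F - Lt) + k" using assms(3) by linarith
  moreover have "enat (card (F - Lt)) \<le> ecard (S \<inter> Bs s)"
  proof -
    have "ecard (F - Lt) \<le> ecard (S \<inter> Bs s)" using s F(1) by (intro ecard_mono) auto
    then show ?thesis using F(2) by (simp add: ecard_def)
  qed
  ultimately have "enat (card F) \<le> ecard (S \<inter> Bs s) + enat k"
  proof -
    have "enat (card F) \<le> enat (card (F - Lt)) + enat k" using \<open>card F \<le> card (F - Lt) + k\<close> by simp
    also have "\<dots> \<le> ecard (S \<inter> Bs s) + enat k" using \<open>enat (card (F - Lt)) \<le> ecard (S \<inter> Bs s)\<close> by (rule add_right_mono)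
    finally show ?thesis .
  qed
  with F(3) show ?thesis by (metis order_trans)
qed

lemma T_incr: "X \<subseteq> T Z X" unfolding T_def by auto

lemma light_line:
  assumes "y \<in> A" "y \<notin> A_gt k A"
  shows "finite {z\<in>A. snd z = snd y} \<and> card {z\<in>A. snd z = snd y} \<le> k
       \<and> finite {z\<in>A. fst z = fst y} \<and> card {z\<in>A. fst z = fst y} \<le> k"
proof -
  have "row y A \<le> enat k" "col y A \<le> enat k" using assms unfolding A_gt_def by auto
  then show ?thesis unfolding row_def col_def ecard_def by (auto split: if_splits)
qed

lemma line_light:
  assumes "Lt \<subseteq> {y. y \<in> A \<and> y \<notin> A_gt k A \<and> P y}"
    and "\<And>y. y \<in> A \<Longrightarrow> y \<notin> A_gt k A \<Longrightarrow> P y \<Longrightarrow>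
          finite {z\<in>A. P z} \<and> card {z\<in>A. P z} \<le> k"
  shows "finite Lt \<and> card Lt \<le> k"
proof (cases "Lt = {}")
  case True then show ?thesis by simp
next
  case False
  then obtain y where y: "y \<in> Lt" by auto
  with assms(1) have h: "finite {z\<in>A. P z} \<and> card {z\<in>A. P z} \<le> k" using assms(2) by blast
  have sub: "Lt \<subseteq> {z\<in>A. P z}" using assms(1) by auto
  then have "finite Lt" using h finite_subset by blast
  moreover have "card Lt \<le> k" using card_mono[OF _ sub] h by fastforce
  ultimately show ?thesis by simp
qed

lemma step:
  fixes Z A X :: "pt set" and x :: pt and k N :: nat
  defines "Bs \<equiv> \<lambda>s. (T (shift Z k) ^^ s) (A_gt k A)"
  assumes zs: "zero_set Z" and bnd: "\<forall>(u,v)\<in>Z. u < N \<and> v < N"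
    and inv: "\<forall>y\<in>X. (\<exists>s. y \<in> Bs s) \<or> (y \<in> A \<and> y \<notin> A_gt k A)"
    and nz: "\<not> in_Z (row x X) (col x X) Z"
  shows "\<exists>s. x \<in> Bs s"
proof -
  have ch: "\<And>s. Bs s \<subseteq> Bs (Suc s)" unfolding Bs_def by (simp add: T_incr)
  define S1 where "S1 = {y\<in>X. snd y = snd x}"
  define S2 where "S2 = {y\<in>X. fst y = fst x}"
  define L1 where "L1 = {y\<in>S1. y \<in> A \<and> y \<notin> A_gt k A}"
  define L2 where "L2 = {y\<in>S2. y \<in> A \<and> y \<notin> A_gt k A}"
  have l1: "finite L1 \<and> card L1 \<le> k"
    by (rule line_light[where A=A and P="\<lambda>z. snd z = snd x"]) (use light_line in \<open>auto simp: L1_def S1_def\<close>)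
  have l2: "finite L2 \<and> card L2 \<le> k"
    by (rule line_light[where A=A and P="\<lambda>z. fst z = fst x"]) (use light_line in \<open>auto simp: L2_def S2_def\<close>)
  have "S1 \<subseteq> (\<Union>s. Bs s) \<union> L1" using inv by (auto simp: S1_def L1_def)
  from count[OF this _ _ ch, of k N] l1 obtain s1 where
    s1: "min (ecard S1) (enat N) \<le> ecard (S1 \<inter> Bs s1) + enat k" by auto
  have "S2 \<subseteq> (\<Union>s. Bs s) \<union> L2" using inv by (auto simp: S2_def L2_def)
  from count[OF this _ _ ch, of k N] l2 obtain s2 where
    s2: "min (ecard S2) (enat N) \<le> ecard (S2 \<inter> Bs s2) + enat k" by auto
  define s where "s = max s1 s2"
  have "Bs s1 \<subseteq> Bs s" "Bs s2 \<subseteq> Bs s"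
    unfolding s_def by (rule chain_mono[of Bs, OF ch], simp)+
  have r: "ecard (S1 \<inter> Bs s1) \<le> row x (Bs s)"
    unfolding row_def using \<open>Bs s1 \<subseteq> Bs s\<close> by (intro ecard_mono) (auto simp: S1_def)
  have c: "ecard (S2 \<inter> Bs s2) \<le> col x (Bs s)"
    unfolding col_def using \<open>Bs s2 \<subseteq> Bs s\<close> by (intro ecard_mono) (auto simp: S2_def)
  have "min (row x X) (enat N) \<le> row x (Bs s) + enat k"
    using order_trans[OF s1 add_right_mono[OF r, of "enat k"]] unfolding row_def S1_def by simp
  moreover have "min (col x X) (enat N) \<le> col x (Bs s) + enat k"
    using order_trans[OF s2 add_right_mono[OF c, of "enat k"]] unfolding col_def S2_def by simp
  ultimately have "\<not> in_Z (row x (Bs s) + enat k) (col x (Bs s) + enat k) Z"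
    by (rule notZ_mono[OF zs bnd nz])
  then have "\<not> in_Z (row x (Bs s)) (col x (Bs s)) (shift Z k)" using shift_inZ by metis
  then have "x \<in> Bs (Suc s)" unfolding Bs_def T_def by auto
  then show ?thesis by blast
qed

lemma row_UNIV: "row x UNIV = \<infinity>"
proof -
  have "infinite {y::pt. snd y = snd x}"
  proof
    assume "finite {y::pt. snd y = snd x}"
    then have "finite (fst ` {y::pt. snd y = snd x})" by simp
    moreover have "fst ` {y::pt. snd y = snd x} = UNIV"
      by (auto simp: image_iff)
    ultimately show False by simp
  qed
  then show ?thesis unfolding row_def ecard_def by simp
qed

theorem mainTheorem12:
  fixes Z A :: "(nat \<times> nat) set" and k :: nat
  assumes "zero_set Z" and "finite Z"
    and "spans Z A"
  shows "spans (shift Z k) (A_gt k A)"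
proof -
  define Bs where "Bs = (\<lambda>s. (T (shift Z k) ^^ s) (A_gt k A))"
  obtain M where M: "\<forall>n\<in>fst ` Z \<union> snd ` Z. n \<le> M"
    using assms(2) finite_nat_set_iff_bounded_le by (meson finite_UnI finite_imageI)
  have bnd: "\<forall>(u,v)\<in>Z. u < Suc M \<and> v < Suc M"
    using M by force
  have inv: "\<forall>y\<in>(T Z ^^ t) A. (\<exists>s. y \<in> Bs s) \<or> (y \<in> A \<and> y \<notin> A_gt k A)" for t
  proof (induction t)
    case 0
    then show ?case unfolding Bs_def by (auto intro: exI[of _ 0])
  next
    case (Suc t)
    show ?case
    proof
      fix y assume "y \<in> (T Z ^^ Suc t) A"
      then have "y \<in> (T Z ^^ t) A \<or> \<not> in_Z (row y ((T Z ^^ t) A)) (col y ((T Z ^^ t) A)) Z"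
        unfolding T_def by auto
      then show "(\<exists>s. y \<in> Bs s) \<or> (y \<in> A \<and> y \<notin> A_gt k A)"
      proof
        assume "y \<in> (T Z ^^ t) A" then show ?thesis using Suc by blast
      next
        assume "\<not> in_Z (row y ((T Z ^^ t) A)) (col y ((T Z ^^ t) A)) Z"
        from step[OF assms(1) bnd _ this, of k] Suc show ?thesis unfolding Bs_def by blast
      qed
    qed
  qed
  have all: "\<forall>y\<in>UNIV. (\<exists>s. y \<in> Bs s) \<or> (y \<in> A \<and> y \<notin> A_gt k A)"
    using inv assms(3) unfolding spans_def by blast
  have nz: "\<not> in_Z (row x UNIV) (col x UNIV) Z" for x
    by (simp add: row_UNIV in_Z_def)
  have "\<exists>s. x \<in> Bs s" for x
    using step[OF assms(1) bnd _ nz, of k A x] all unfolding Bs_def by blast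
  then show ?thesis unfolding spans_def Bs_def by blast
qed

end
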